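(* Let $A(t)$, $t>1$, be a family of complex $2\times 2$ matrices with $\det(A(t))=1$ for all $t$, and suppose there are a real number $\alpha$ and a nonzero complex $2\times 2$ matrix $B$ such that $A(t)=t^\alpha B+o(t^\alpha)$ as $t\to\infty$ (i.e. $t^{-\alpha}A(t)\to B$). Then, as $t\to\infty$, $\tilde R_{(\log t)^{-1}}([A(t)]_{\mathbb{C}^*})$ converges in $PSL_2(\mathbb{C})$ to $[e^\alpha B+e^{-\alpha}(B^{\mathbf c})^*]_{\mathbb{C}^*}$.
   Context: For a complex $2\times 2$ matrix $B=\begin{pmatrix}a&b\\ c&d\end{pmatrix}$ write $B^{\mathbf c}=\begin{pmatrix}d&-b\\ -c&a\end{pmatrix}$ and let $B^*$ denote the conjugate transpose. $\mathbb{C}P^3$ is the projectivization of the space of complex $2\times 2$ matrices, $[B]_{\mathbb{C}^*}$ the class of a nonzero matrix, and $PSL_2(\mathbb{C})\subset\mathbb{C}P^3$ the set of classes with nonzero determinant. For $h>0$, the map $\tilde R_h\colon PSL_2(\mathbb{C})\to PSL_2(\mathbb{C})$ is defined as follows: choose a representative $A$ with $\det(A)=1$, write its polar decomposition $A=PU$ with $P$ positive definite Hermitian and $U$ unitary, and set $\tilde R_h([A]_{\mathbb{C}^*})=[P^hU]_{\mathbb{C}^*}$, where $P^h$ is the positive definite power of $P$. *)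

theory Defs
  imports "HOL-Analysis.Analysis"
begin

type_synonym cmat2 = "complex^2^2"

definition mat2 :: "complex \<Rightarrow> complex \<Rightarrow> complex \<Rightarrow> complex \<Rightarrow> cmat2" where
  "mat2 a b c d = (\<chi> i j. if i = 1 then (if j = 1 then a else b) else (if j = 1 then c else d))"

definition csmult :: "complex \<Rightarrow> cmat2 \<Rightarrow> cmat2" where
  "csmult c M = (\<chi> i j. c * M$i$j)"

definition adj :: "cmat2 \<Rightarrow> cmat2" where
  "adj M = (\<chi> i j. cnj (M$j$i))"

definition cofm :: "cmat2 \<Rightarrow> cmat2" where
  "cofm M = mat2 (M$2$2) (- (M$1$2)) (- (M$2$1)) (M$1$1)"

definition unitary2 :: "cmat2 \<Rightarrow> bool" where
  "unitary2 U \<longleftrightarrow> adj U ** U = mat 1"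

definition posdef2 :: "cmat2 \<Rightarrow> bool" where
  "posdef2 P \<longleftrightarrow> adj P = P \<and>
     (\<forall>x::complex^2. x \<noteq> 0 \<longrightarrow> 0 < Re (\<Sum>i\<in>UNIV. cnj (x$i) * (P *v x)$i))"

definition pdpow :: "cmat2 \<Rightarrow> real \<Rightarrow> cmat2" where
  "pdpow P h = (THE Q. \<exists>V l1 l2. unitary2 V \<and> 0 < l1 \<and> 0 < l2 \<and>
      P = V ** mat2 (of_real l1) 0 0 (of_real l2) ** adj V \<and>
      Q = V ** mat2 (of_real (l1 powr h)) 0 0 (of_real (l2 powr h)) ** adj V)"

definition polar_rep :: "real \<Rightarrow> cmat2 \<Rightarrow> cmat2" where
  "polar_rep h A = (SOME M. \<exists>P U. posdef2 P \<and> unitary2 U \<and> A = P ** U \<and> M = pdpow P h ** U)"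

definition pclass :: "cmat2 \<Rightarrow> cmat2 set" where
  "pclass M = {csmult c M | c. c \<noteq> 0}"

definition PSL2 :: "cmat2 set set" where
  "PSL2 = {pclass A | A. det A \<noteq> 0}"

definition Rtilde :: "real \<Rightarrow> cmat2 set \<Rightarrow> cmat2 set" where
  "Rtilde h X = pclass (polar_rep h (SOME A. det A = 1 \<and> X = pclass A))"

text \<open>Convergence in CP^3 (quotient topology of nonzero matrices modulo C^*):
  there are representatives converging to a nonzero representative of the limit.\<close>
definition proj_tendsto :: "('b \<Rightarrow> cmat2 set) \<Rightarrow> cmat2 set \<Rightarrow> 'b filter \<Rightarrow> bool" where
  "proj_tendsto X L F \<longleftrightarrow> (\<exists>f N. N \<noteq> 0 \<and> L = pclass N \<and>
      (\<forall>\<^sub>F t in F. f t \<in> X t) \<and> (f \<longlongrightarrow> N) F)"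

end

theory Submission
  imports Defs
begin


lemma mat2_nth [simp]:
  "mat2 a b c d $ 1 $ 1 = a" "mat2 a b c d $ 1 $ 2 = b"
  "mat2 a b c d $ 2 $ 1 = c" "mat2 a b c d $ 2 $ 2 = d"
  by (simp_all add: mat2_def)

lemma mat2_eta: "M = mat2 (M$1$1) (M$1$2) (M$2$1) (M$2$2)"
  unfolding mat2_def by (simp add: vec_eq_iff forall_2)

lemma mat2_eq_iff [simp]: "mat2 a b c d = mat2 a' b' c' d' \<longleftrightarrow> a = a' \<and> b = b' \<and> c = c' \<and> d = d'"
  by (metis mat2_nth)

lemma mat2_cases: obtains a b c d where "M = mat2 a b c d"
  using mat2_eta by blast

lemma mat2_mult [simp]: "mat2 a b c d ** mat2 e f g k = mat2 (a*e+b*g) (a*f+b*k) (c*e+d*g) (c*f+d*k)"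
  by (simp add: matrix_matrix_mult_def mat2_def vec_eq_iff forall_2 sum_2)

lemma mat2_add [simp]: "mat2 a b c d + mat2 e f g k = mat2 (a+e) (b+f) (c+g) (d+k)"
  by (simp add: mat2_def vec_eq_iff forall_2)

lemma mat2_diff [simp]: "mat2 a b c d - mat2 e f g k = mat2 (a-e) (b-f) (c-g) (d-k)"
  by (simp add: mat2_def vec_eq_iff forall_2)

lemma csmult_mat2 [simp]: "csmult x (mat2 a b c d) = mat2 (x*a) (x*b) (x*c) (x*d)"
  by (simp add: csmult_def mat2_def vec_eq_iff forall_2)

lemma adj_mat2 [simp]: "adj (mat2 a b c d) = mat2 (cnj a) (cnj c) (cnj b) (cnj d)"
  by (simp add: adj_def mat2_def vec_eq_iff forall_2)

lemma cofm_mat2 [simp]: "cofm (mat2 a b c d) = mat2 d (-b) (-c) a"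
  by (simp add: cofm_def)

lemma mat1_mat2: "(mat 1 :: cmat2) = mat2 1 0 0 1"
  by (simp add: mat2_def mat_def vec_eq_iff forall_2)

lemma zero_mat2: "(0 :: cmat2) = mat2 0 0 0 0"
  by (simp add: mat2_def vec_eq_iff forall_2)

lemma det_mat2 [simp]: "det (mat2 a b c d) = a*d - b*c"
  by (simp add: det_2)

lemma mat2_mult_vec [simp]: "(mat2 a b c d *v x) $ 1 = a * x$1 + b * x$2"
   "(mat2 a b c d *v x) $ 2 = c * x$1 + d * x$2"
  by (simp_all add: matrix_vector_mult_def sum_2)




lemma csmult_mult_left: "csmult c X ** Y = csmult c (X ** Y)"
  by (rule mat2_cases[of X], rule mat2_cases[of Y]) (simp add: algebra_simps)
lemma csmult_mult_right: "X ** csmult c Y = csmult c (X ** Y)"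
  by (rule mat2_cases[of X], rule mat2_cases[of Y]) (simp add: algebra_simps)
lemma csmult_csmult: "csmult c (csmult d X) = csmult (c*d) X"
  by (rule mat2_cases[of X]) (simp add: algebra_simps)
lemma adj_csmult: "adj (csmult c X) = csmult (cnj c) (adj X)"
  by (rule mat2_cases[of X]) (simp add: algebra_simps)
lemma adj_mult: "adj (X ** Y) = adj Y ** adj X"
  by (rule mat2_cases[of X], rule mat2_cases[of Y]) (simp add: algebra_simps)
lemma adj_add: "adj (X + Y) = adj X + adj Y"
  by (rule mat2_cases[of X], rule mat2_cases[of Y]) (simp add: algebra_simps)
lemma adj_adj: "adj (adj X) = X"
  by (rule mat2_cases[of X]) (simp add: algebra_simps)
lemma csmult_one: "csmult 1 X = X"
  by (rule mat2_cases[of X]) (simp add: algebra_simps)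
lemma csmult_add: "csmult c (X + Y) = csmult c X + csmult c Y"
  by (rule mat2_cases[of X], rule mat2_cases[of Y]) (simp add: algebra_simps)
lemma csmult_add2: "csmult (c + d) X = csmult c X + csmult d X"
  by (rule mat2_cases[of X]) (simp add: algebra_simps)
lemma det_adj: "det (adj X) = cnj (det X)"
  by (rule mat2_cases[of X]) (simp add: algebra_simps)
lemma det_csmult: "det (csmult c X) = c^2 * det X"
  by (rule mat2_cases[of X]) (simp add: algebra_simps power2_eq_square)
lemma cofm_mult_self: "cofm X ** X = csmult (det X) (mat 1)"
  by (rule mat2_cases[of X]) (simp add: algebra_simps mat1_mat2)
lemma adj_mat1: "adj (mat 1) = (mat 1 :: cmat2)"
  by (simp add: mat1_mat2)
lemma unitary2_right: "unitary2 U \<Longrightarrow> U ** adj U = mat 1"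
  unfolding unitary2_def using matrix_left_right_inverse by blast



definition sqn :: "cmat2 \<Rightarrow> real" where
  "sqn M = (cmod (M$1$1))^2 + (cmod (M$1$2))^2 + (cmod (M$2$1))^2 + (cmod (M$2$2))^2"
definition ac :: "cmat2 \<Rightarrow> cmat2" where "ac M = adj (cofm M)"
definition tau :: "cmat2 \<Rightarrow> real" where "tau M = sqrt (sqn M + 2)"
definition P0 :: "cmat2 \<Rightarrow> cmat2" where
  "P0 M = csmult (of_real (1 / tau M)) (M ** adj M + mat 1)"
definition U0 :: "cmat2 \<Rightarrow> cmat2" where
  "U0 M = csmult (of_real (1 / tau M)) (M + ac M)"

lemma sqn_mat2_c: "of_real (sqn (mat2 p q r w)) = p*cnj p + q*cnj q + r*cnj r + w*cnj w"
  unfolding sqn_def of_real_add by (simp only: mat2_nth complex_norm_square)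

lemma sqn_ge2:
  assumes "det M = 1" shows "sqn M \<ge> 2"
proof -
  obtain p q r w where M: "M = mat2 p q r w" by (rule mat2_cases)
  have d: "p*w - q*r = 1" using assms M by simp
  have "1 = cmod (p*w - q*r)" using d by simp
  also have "\<dots> \<le> cmod p * cmod w + cmod q * cmod r"
    using norm_triangle_ineq4[of "p*w" "q*r"] by (simp add: norm_mult)
  finally have 1: "1 \<le> cmod p * cmod w + cmod q * cmod r" .
  have "0 \<le> (cmod p - cmod w)^2 + (cmod q - cmod r)^2" by simp
  then show ?thesis using 1 M by (simp add: sqn_def power2_eq_square algebra_simps)
qed

lemma tau_pos: "det M = 1 \<Longrightarrow> tau M > 0"
  using sqn_ge2[of M] by (simp add: tau_def)

lemma tau_sq: "det M = 1 \<Longrightarrow> (tau M)^2 = sqn M + 2"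
  using sqn_ge2[of M] by (simp add: tau_def)

lemma core1:
  assumes "det M = 1"
  shows "(M ** adj M + mat 1) ** (M + ac M) = csmult (of_real (sqn M + 2)) M"
proof -
  obtain p q r w where M: "M = mat2 p q r w" by (rule mat2_cases)
  have d: "p*w - q*r = 1" using assms M by simp
  have d2: "cnj p * cnj w - cnj q * cnj r = 1" using arg_cong[OF d, of cnj] by simp
  have S: "of_real (sqn M) = p*cnj p + q*cnj q + r*cnj r + w*cnj w" using M sqn_mat2_c by simp
  show ?thesis unfolding M ac_def using d d2 S[unfolded M]
    apply (simp add: mat1_mat2)
    apply (intro conjI)
    subgoal by algebra
    subgoal by algebra
    subgoal by algebra
    subgoal by algebra
    done
qed

lemma core2:
  assumes "det M = 1"
  shows "adj (M + ac M) ** (M + ac M) = csmult (of_real (sqn M + 2)) (mat 1)"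
proof -
  obtain p q r w where M: "M = mat2 p q r w" by (rule mat2_cases)
  have d: "p*w - q*r = 1" using assms M by simp
  have d2: "cnj p * cnj w - cnj q * cnj r = 1" using arg_cong[OF d, of cnj] by simp
  have S: "of_real (sqn M) = p*cnj p + q*cnj q + r*cnj r + w*cnj w" using M sqn_mat2_c by simp
  show ?thesis unfolding M ac_def using d d2 S[unfolded M]
    apply (simp add: mat1_mat2)
    apply (intro conjI)
    subgoal by algebra
    subgoal by (simp add: algebra_simps)
    subgoal by (simp add: algebra_simps)
    subgoal by (simp add: algebra_simps)
    done
qed

lemma P0U0: assumes "det M = 1" shows "P0 M ** U0 M = M"
proof -
  have t: "tau M > 0" "(tau M)^2 = sqn M + 2" using tau_pos tau_sq assms by auto
  have "P0 M ** U0 M = csmult (of_real (1/tau M) * of_real (1/tau M) * of_real (sqn M + 2)) M"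
    unfolding P0_def U0_def csmult_mult_left csmult_mult_right core1[OF assms] csmult_csmult
    by (simp add: mult.assoc)
  also have "of_real (1/tau M) * of_real (1/tau M) * of_real (sqn M + 2) = (1::complex)"
  proof -
    have "1/tau M * (1/tau M) * (sqn M + 2) = 1" using t sqn_ge2[OF assms] by (simp add: power2_eq_square field_simps)
    then show ?thesis by (metis of_real_1 of_real_mult)
  qed
  finally show ?thesis by (simp add: csmult_one)
qed

lemma U0_unitary: assumes "det M = 1" shows "unitary2 (U0 M)"
proof -
  have t: "tau M > 0" "(tau M)^2 = sqn M + 2" using tau_pos tau_sq assms by auto
  have "adj (U0 M) ** U0 M = csmult (of_real (1/tau M) * of_real (1/tau M) * of_real (sqn M + 2)) (mat 1)"
    unfolding U0_def adj_csmult csmult_mult_left csmult_mult_right core2[OF assms] csmult_csmult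
    by (simp add: mult.assoc)
  also have "of_real (1/tau M) * of_real (1/tau M) * of_real (sqn M + 2) = (1::complex)"
  proof -
    have "1/tau M * (1/tau M) * (sqn M + 2) = 1" using t sqn_ge2[OF assms] by (simp add: power2_eq_square field_simps)
    then show ?thesis by (metis of_real_1 of_real_mult)
  qed
  finally show ?thesis by (simp add: csmult_one unitary2_def)
qed



lemma normsq_c: "z * cnj z = of_real ((cmod z)^2)"
  by (rule complex_norm_square[symmetric])

lemma normsq_c2: "z * cnj z = (of_real (cmod z))^2"
  by (simp add: normsq_c)

lemma P0_herm: "adj (P0 M) = P0 M"
  unfolding P0_def adj_csmult adj_add adj_mult adj_adj adj_mat1 by simp

lemma P0_posdef: assumes "det M = 1" shows "posdef2 (P0 M)"
  unfolding posdef2_def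
proof (intro conjI allI impI)
  show "adj (P0 M) = P0 M" by (rule P0_herm)
  fix x :: "complex^2" assume x: "x \<noteq> 0"
  obtain p q r w where M: "M = mat2 p q r w" by (rule mat2_cases)
  define x1 where "x1 = x$1"
  define x2 where "x2 = x$2"
  have nz: "x1 \<noteq> 0 \<or> x2 \<noteq> 0" using x unfolding x1_def x2_def by (auto simp: vec_eq_iff forall_2)
  define y1 where "y1 = cnj p * x1 + cnj r * x2"
  define y2 where "y2 = cnj q * x1 + cnj w * x2"
  have E0: "\<And>cc. (\<Sum>i\<in>UNIV. cnj (x$i) * (csmult cc (M ** adj M + mat 1) *v x)$i) = cc * (y1 * cnj y1 + y2 * cnj y2 + x1 * cnj x1 + x2 * cnj x2)"
    unfolding M sum_2 y1_def y2_def x1_def x2_def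
    by (simp add: mat1_mat2) algebra
  have E: "(\<Sum>i\<in>UNIV. cnj (x$i) * (P0 M *v x)$i) = of_real (1/tau M) * (y1 * cnj y1 + y2 * cnj y2 + x1 * cnj x1 + x2 * cnj x2)"
    unfolding P0_def by (rule E0)
  have t: "tau M > 0" using tau_pos[OF assms] .
  have R: "Re (\<Sum>i\<in>UNIV. cnj (x$i) * (P0 M *v x)$i) = (1/tau M) * ((cmod y1)^2 + (cmod y2)^2 + (cmod x1)^2 + (cmod x2)^2)"
    unfolding E normsq_c by simp
  have "(cmod x1)^2 + (cmod x2)^2 > 0" using nz by (auto intro: add_pos_nonneg add_nonneg_pos)
  moreover have "0 \<le> (cmod y1)^2 + (cmod y2)^2" by simp
  ultimately have pos: "0 < (1/tau M) * ((cmod y1)^2 + (cmod y2)^2 + (cmod x1)^2 + (cmod x2)^2)"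
  proof (intro mult_pos_pos)
    have "0 \<le> (cmod y1)^2" "0 \<le> (cmod y2)^2" by simp_all
    then show "0 < (cmod y1)^2 + (cmod y2)^2 + (cmod x1)^2 + (cmod x2)^2"
      using \<open>(cmod x1)^2 + (cmod x2)^2 > 0\<close> by linarith
  qed (use t in simp)
  show "0 < Re (\<Sum>i\<in>UNIV. cnj (x$i) * (P0 M *v x)$i)"
    unfolding R by (rule pos)
qed

definition vec2 :: "complex \<Rightarrow> complex \<Rightarrow> complex^2" where
  "vec2 u v = (\<chi> i. if i = 1 then u else v)"
lemma vec2_nth [simp]: "vec2 u v $ 1 = u" "vec2 u v $ 2 = v"
  by (simp_all add: vec2_def)
lemma vec2_nz: "u \<noteq> 0 \<Longrightarrow> vec2 u v \<noteq> 0"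
  by (metis vec2_nth(1) zero_index)

lemma vec2_nz2: "v \<noteq> 0 \<Longrightarrow> vec2 u v \<noteq> 0"
  by (metis vec2_nth(2) zero_index)

lemma trace_MMadj: "(M ** adj M)$1$1 + (M ** adj M)$2$2 = of_real (sqn M)"
proof -
  obtain p q r w where M: "M = mat2 p q r w" by (rule mat2_cases)
  show ?thesis unfolding M sqn_mat2_c by (simp add: algebra_simps)
qed

lemma det_MMadj: "det M = 1 \<Longrightarrow> det (M ** adj M) = 1"
  by (simp add: det_mul det_adj)

lemma polar_unique:
  assumes dM: "det M = 1" and pP: "posdef2 P" and uU: "unitary2 U" and MPU: "M = P ** U"
  shows "P = P0 M \<and> U = U0 M"
proof -
  obtain a b c d where P: "P = mat2 a b c d" by (rule mat2_cases)
  have herm: "adj P = P" using pP by (simp add: posdef2_def)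
  then have ha: "cnj a = a" and hb: "c = cnj b" and hd: "cnj d = d" using P by auto
  have pos: "\<And>x. x \<noteq> 0 \<Longrightarrow> 0 < Re (\<Sum>i\<in>UNIV. cnj (x$i) * (P *v x)$i)"
    using pP by (simp add: posdef2_def)
  have "0 < Re a" using pos[OF vec2_nz[of 1 0]] P by (simp add: sum_2)
  have "0 < Re d" using pos[OF vec2_nz2[of 1 0]] P by (simp add: sum_2)
  have an: "a \<noteq> 0" using \<open>0 < Re a\<close> by auto
  have "(\<Sum>i\<in>UNIV. cnj (vec2 (-b) a $ i) * (P *v vec2 (-b) a) $ i) = cnj a * (d * a - c * b)"
    unfolding P sum_2 by (simp add: algebra_simps)
  then have p3: "0 < Re (cnj a * (d * a - c * b))"
    using pos[OF vec2_nz2[OF an, of "-b"]] by simp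
  obtain ar where ar: "a = of_real ar" using ha by (metis Reals_cnj_iff complex_is_Real_iff of_real_Re)
  obtain dr where dr: "d = of_real dr" using hd by (metis Reals_cnj_iff complex_is_Real_iff of_real_Re)
  have arp: "ar > 0" "dr > 0" using \<open>0 < Re a\<close> \<open>0 < Re d\<close> ar dr by auto
  define D where "D = ar * dr - (cmod b)^2"
  have detP: "det P = of_real D"
    unfolding P D_def ar dr hb by (simp add: normsq_c2)
  have "0 < ar * D" using p3 unfolding ar dr hb D_def normsq_c[symmetric]
    by (simp add: algebra_simps mult.commute[of b "cnj b"] normsq_c2)
  then have Dp: "D > 0" using arp by (simp add: zero_less_mult_iff)
  have UU: "U ** adj U = mat 1" using unitary2_right[OF uU] .
  have MM: "M ** adj M = P ** P"
    unfolding MPU adj_mult herm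
    by (metis UU matrix_mul_assoc matrix_mul_rid)
  have "det (P ** P) = 1" using det_MMadj[OF dM] MM by simp
  then have "D * D = 1" unfolding det_mul detP by (metis of_real_1 of_real_eq_iff of_real_mult)
  then have D1: "D = 1" using Dp by (metis mult_cancel_left1 mult_le_cancel_left1 nle_le not_less_iff_gr_or_eq order.strict_trans zero_less_one mult_less_cancel_left1)
  have dP: "a*d - b*c = 1" using detP D1 P by simp
  have CH: "P ** P + mat 1 = csmult (a + d) P"
    unfolding P mat1_mat2 using dP by simp algebra
  have "(P ** P)$1$1 + (P ** P)$2$2 = of_real (sqn M)" using trace_MMadj[of M] MM by simp
  then have tr: "2 * (b * c) + (a * a + d * d) = of_real (sqn M)" unfolding P by (simp add: algebra_simps)
  have "(a+d)*(a+d) = (2*(b*c) + (a*a+d*d)) + 2*(a*d - b*c)" by (simp add: algebra_simps)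
  then have "(a + d)^2 = of_real (sqn M + 2)" unfolding tr dP by (simp add: power2_eq_square)
  then have "(ar + dr)^2 = sqn M + 2" unfolding ar dr
    by (metis of_real_add of_real_eq_iff of_real_power)
  then have T: "ar + dr = tau M" unfolding tau_def using arp by (metis add_pos_pos less_imp_le real_sqrt_abs abs_of_pos)
  have PP0: "P0 M = P"
    unfolding P0_def MM CH ar dr csmult_csmult T[symmetric]
    using arp by (simp add: csmult_one flip: of_real_add of_real_mult)
  have cP: "cofm P ** P = mat 1" unfolding cofm_mult_self detP D1 by (simp add: csmult_one)
  have "U = cofm P ** M" unfolding MPU matrix_mul_assoc cP by simp
  moreover have "U0 M = cofm P ** M" using P0U0[OF dM] unfolding PP0
    by (metis cP matrix_mul_assoc matrix_mul_lid)
  ultimately show ?thesis using PP0 by simp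
qed

lemma polar_rep_eq:
  assumes "det M = 1" shows "polar_rep h M = pdpow (P0 M) h ** U0 M"
  unfolding polar_rep_def
proof (rule some_equality)
  show "\<exists>P U. posdef2 P \<and> unitary2 U \<and> M = P ** U \<and> pdpow (P0 M) h ** U0 M = pdpow P h ** U"
    using P0_posdef[OF assms] U0_unitary[OF assms] P0U0[OF assms] by metis
next
  fix X assume "\<exists>P U. posdef2 P \<and> unitary2 U \<and> M = P ** U \<and> X = pdpow P h ** U"
  then show "X = pdpow (P0 M) h ** U0 M" using polar_unique[OF assms] by metis
qed



definition lam :: "real \<Rightarrow> real" where "lam s = (sqrt (s+2) + sqrt (s-2)) / 2"
definition ga :: "real \<Rightarrow> real \<Rightarrow> real" where
  "ga l h = (if l = 1 then 0 else (l powr h - l powr (-h)) / (l - 1/l))"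
definition gb :: "real \<Rightarrow> real \<Rightarrow> real" where
  "gb l h = ((l powr h + l powr (-h)) - (l + 1/l) * ga l h) / 2"

lemma lam_props:
  assumes "s \<ge> 2"
  shows "lam s \<ge> 1" "lam s + 1 / lam s = sqrt (s+2)" "(lam s)^2 \<le> s" "(lam s)^2 \<ge> s/2"
proof -
  define u where "u = sqrt (s+2)"
  define v where "v = sqrt (s-2)"
  have s2: "s - 2 \<ge> 0" "s + 2 \<ge> 0" "2^2 \<le> s + 2" using assms by auto
  have u2: "u^2 = s+2" unfolding u_def using s2(2) by (rule real_sqrt_pow2)
  have v2: "v^2 = s-2" unfolding v_def using s2(1) by (rule real_sqrt_pow2)
  have u0: "u \<ge> 2" unfolding u_def using s2(3) by (rule real_le_rsqrt)
  have v0: "v \<ge> 0" unfolding v_def using s2(1) by simp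
  have L: "lam s = (u+v)/2" by (simp add: lam_def u_def v_def)
  show "lam s \<ge> 1" using L u0 v0 by simp
  have "(u+v)*(u-v) = 4" using u2 v2 by (simp add: algebra_simps power2_eq_square)
  then have A: "1 / lam s = (u - v)/2" unfolding L using u0 v0
    by (simp add: field_simps)
  show "lam s + 1 / lam s = sqrt (s+2)" unfolding u_def[symmetric] A unfolding L by (simp add: field_simps)
  have sq: "(lam s)^2 = (s + u * v) / 2" unfolding L using u2 v2
    by (simp add: power2_eq_square field_simps)
  have "(u * v)^2 = (s+2)*(s-2)" by (simp add: power_mult_distrib u2 v2)
  then have "(u * v)^2 \<le> s^2" by (simp add: algebra_simps power2_eq_square)
  then have "u * v \<le> s" using assms by (metis abs_le_square_iff abs_of_nonneg order_trans abs_ge_self zero_le_numeral order.trans[of 0 2 s])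
  moreover have "0 \<le> u * v" using u0 v0 by simp
  ultimately show "(lam s)^2 \<le> s" "(lam s)^2 \<ge> s/2" unfolding sq by simp_all
qed

lemma ga_gb:
  assumes l: "l \<ge> 1"
  shows "ga l h * l + gb l h = l powr h" "ga l h * (1/l) + gb l h = (1/l) powr h"
proof -
  have lp: "l > 0" using l by simp
  have inv: "(1/l) powr h = l powr (-h)" using lp by (simp add: powr_minus_divide powr_divide)
  have X: "l powr (-h) = 1 / l powr h" using lp by (simp add: powr_minus_divide)
  have Xp: "l powr h > 0" using lp by simp
  have "ga l h * l + gb l h = l powr h \<and> ga l h * (1/l) + gb l h = (1/l) powr h"
  proof (cases "l = 1")
    case True then show ?thesis
      by (simp_all add: ga_def gb_def)
  next
    case False
    then have l1: "l > 1" using l by simp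
    have ll: "l*l > 1" using mult_strict_mono[of 1 l 1 l] l1 by simp
    have nz2: "l*l - 1 \<noteq> 0" using ll by simp
    have nz: "l - 1/l \<noteq> 0" using ll lp by (simp add: field_simps)
    have key: "(l - 1/l) * ga l h = l powr h - l powr (-h)"
      unfolding ga_def using False nz by simp
    have g2: "2 * gb l h = (l powr h + l powr (-h)) - (l + 1/l) * ga l h"
      unfolding gb_def by simp
    have e1: "ga l h * l + gb l h = l powr h"
      using key g2 by (simp add: algebra_simps)
    have e2: "ga l h * (1/l) + gb l h = l powr (-h)"
      using key g2 by (simp add: algebra_simps)
    show ?thesis using e1 e2 inv by simp
  qed
  then show "ga l h * l + gb l h = l powr h" "ga l h * (1/l) + gb l h = (1/l) powr h" by auto
qed



lemma csmult_nth [simp]: "csmult c X $ i $ j = c * X $ i $ j"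
  by (simp add: csmult_def)

lemma mat1_nth: "(mat 1 :: cmat2) $ 1 $ 1 = 1" "(mat 1 :: cmat2) $ 2 $ 2 = 1"
  by (simp_all add: mat_def)

lemma det_P0: assumes "det M = 1" shows "det (P0 M) = 1"
proof -
  obtain p q r w where M: "M = mat2 p q r w" by (rule mat2_cases)
  have d: "p*w - q*r = 1" using assms M by simp
  have d2: "cnj p * cnj w - cnj q * cnj r = 1" using arg_cong[OF d, of cnj] by simp
  have S: "of_real (sqn M) = p*cnj p + q*cnj q + r*cnj r + w*cnj w" using M sqn_mat2_c by simp
  have "det (M ** adj M + mat 1) = of_real (sqn M + 2)"
    unfolding M using d d2 S[unfolded M] by (simp add: mat1_mat2) algebra
  moreover have "(of_real (1 / tau M))^2 * of_real (sqn M + 2) = (1::complex)"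
  proof -
    have e: "(1 / tau M)^2 * (sqn M + 2) = 1" using tau_sq[OF assms] tau_pos[OF assms] sqn_ge2[OF assms]
      by (simp add: power_divide)
    show ?thesis using arg_cong[OF e, of "of_real :: real \<Rightarrow> complex"] by simp
  qed
  ultimately show ?thesis unfolding P0_def det_csmult by simp
qed

lemma tr_P0: assumes "det M = 1" shows "(P0 M)$1$1 + (P0 M)$2$2 = of_real (tau M)"
proof -
  have "(P0 M)$1$1 + (P0 M)$2$2 = of_real (1 / tau M) * ((M ** adj M)$1$1 + (M ** adj M)$2$2 + 2)"
    unfolding P0_def by (simp add: mat1_nth algebra_simps)
  also have "\<dots> = of_real (1 / tau M * (sqn M + 2))" unfolding trace_MMadj by simp
  also have "1 / tau M * (sqn M + 2) = tau M" using tau_sq[OF assms] tau_pos[OF assms]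
    by (simp add: power2_eq_square field_simps)
  finally show ?thesis .
qed

lemma spec_exists:
  assumes herm: "adj P = P" and dP: "det P = 1" and tP: "P$1$1 + P$2$2 = of_real (l + 1/l)"
    and l: "l \<ge> 1"
  shows "\<exists>V l1 l2. unitary2 V \<and> 0 < l1 \<and> 0 < l2 \<and> P = V ** mat2 (of_real l1) 0 0 (of_real l2) ** adj V"
proof -
  obtain a b c d where P: "P = mat2 a b c d" by (rule mat2_cases)
  then have ha: "cnj a = a" and hb: "c = cnj b" and hd: "cnj d = d" using herm by auto
  have "Im a = 0" using arg_cong[OF ha, of Im] by simp
  then obtain ar where ar: "a = of_real ar" by (intro that[of "Re a"]) (simp add: complex_eq_iff)
  have "Im d = 0" using arg_cong[OF hd, of Im] by simp
  then obtain dr where dr: "d = of_real dr" by (intro that[of "Re d"]) (simp add: complex_eq_iff)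
  define B where "B = (cmod b)^2"
  have bb: "b * cnj b = of_real B" unfolding B_def by (rule normsq_c)
  have "of_real (ar * dr - B) = (1::complex)" using dP unfolding P ar dr hb
    by (simp add: bb)
  then have det1: "ar * dr - B = 1" using of_real_eq_1_iff by blast
  have "of_real (ar + dr) = (of_real (l + 1/l) :: complex)" using tP unfolding P ar dr by simp
  then have tr1: "ar + dr = l + 1/l" using of_real_eq_iff by blast
  have lp: "l > 0" using l by simp
  show ?thesis
  proof (cases "b = 0")
    case True
    then have "ar * dr = 1" using det1 B_def by simp
    moreover have "ar + dr > 0" using tr1 lp by (simp add: add_pos_pos)
    moreover have "(0<ar \<and> 0<dr) \<or> (ar<0 \<and> dr<0)"
      using \<open>ar * dr = 1\<close> zero_less_mult_iff[of ar dr] by simp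
    ultimately have "ar > 0" "dr > 0" by auto
    moreover have "P = mat 1 ** mat2 (of_real ar) 0 0 (of_real dr) ** adj (mat 1)"
      unfolding P ar dr hb True by (simp add: mat1_mat2)
    moreover have "unitary2 (mat 1)" by (simp add: unitary2_def adj_mat1)
    ultimately show ?thesis by blast
  next
    case False
    define m where "m = 1/l"
    have lm: "l * m = 1" unfolding m_def using lp by simp
    have mp: "m > 0" unfolding m_def using lp by simp
    have Bp: "B > 0" unfolding B_def using False by simp
    define n1 where "n1 = sqrt (B + (l - ar)^2)"
    define n2 where "n2 = sqrt (B + (m - ar)^2)"
    have n1p: "n1 > 0" unfolding n1_def using Bp by (simp add: add_pos_nonneg)
    have n2p: "n2 > 0" unfolding n2_def using Bp by (simp add: add_pos_nonneg)
    have n1s: "n1^2 = B + (l - ar)^2" unfolding n1_def using Bp by (simp add: add_pos_nonneg less_imp_le)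
    have n2s: "n2^2 = B + (m - ar)^2" unfolding n2_def using Bp by (simp add: add_pos_nonneg less_imp_le)
    define V' where "V' = mat2 b b (of_real (l - ar)) (of_real (m - ar))"
    define N where "N = mat2 (of_real (1/n1)) 0 0 (of_real (1/n2))"
    define V where "V = V' ** N"
    have tr2: "ar + dr = l + m" using tr1 m_def by simp
    have "(l - ar)*(m - ar) = l*m - ar*(l+m) + ar*ar" by (simp add: algebra_simps)
    also have "\<dots> = 1 - ar*dr" unfolding lm tr2[symmetric] by (simp add: algebra_simps)
    finally have orth: "B + (l - ar) * (m - ar) = 0" using det1 by linarith
    have VV': "adj V' ** V' = mat2 (of_real (n1^2)) 0 0 (of_real (n2^2))"
    proof -
      have "cnj b * b + of_real (l - ar) * of_real (m - ar) = (of_real (B + (l - ar) * (m - ar)) :: complex)"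
        using bb by (simp add: mult.commute)
      then have e12: "cnj b * b + of_real (l - ar) * of_real (m - ar) = (0::complex)" using orth by simp
      then have e21: "b * cnj b + of_real (m - ar) * of_real (l - ar) = (0::complex)" by (simp add: mult.commute)
      have e11: "cnj b * b + of_real (l - ar) * of_real (l - ar) = (of_real (n1^2)::complex)"
        unfolding n1s by (simp add: bb mult.commute[of "cnj b"] power2_eq_square)
      have e22: "cnj b * b + of_real (m - ar) * of_real (m - ar) = (of_real (n2^2)::complex)"
        unfolding n2s by (simp add: bb mult.commute[of "cnj b"] power2_eq_square)
      show ?thesis unfolding V'_def using e11 e12 e21 e22 by (simp add: mult.commute)
    qed
    have uV: "unitary2 V"
    proof -
      have "adj V ** V = adj N ** (adj V' ** V') ** N" unfolding V_def adj_mult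
        by (simp add: matrix_mul_assoc)
      also have "\<dots> = mat 1" unfolding VV' N_def using n1p n2p
        by (simp add: mat1_mat2 power2_eq_square flip: of_real_mult)
      finally show ?thesis unfolding unitary2_def .
    qed
    have PV': "P ** V' = V' ** mat2 (of_real l) 0 0 (of_real m)"
    proof -
      have "ar*l + dr*l = (l+m)*l" unfolding tr2[symmetric] by (simp add: algebra_simps)
      then have E1: "ar*l + dr*l = l*l + 1" using lm by (simp add: algebra_simps)
      have "ar*m + dr*m = (l+m)*m" unfolding tr2[symmetric] by (simp add: algebra_simps)
      then have E2: "ar*m + dr*m = m*m + 1" using lm by (simp add: algebra_simps)
      have "B + dr*(l-ar) - (l-ar)*l = (B - ar*dr + 1) + (ar*l + dr*l - l*l - 1)" by (simp add: algebra_simps)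
      then have c1: "B + dr*(l-ar) = (l-ar)*l" using E1 det1 by simp
      have "B + dr*(m-ar) - (m-ar)*m = (B - ar*dr + 1) + (ar*m + dr*m - m*m - 1)" by (simp add: algebra_simps)
      then have c2: "B + dr*(m-ar) = (m-ar)*m" using E2 det1 by simp
      have c1c: "cnj b * b + of_real dr * of_real (l - ar) = of_real (l - ar) * (of_real l :: complex)"
        using arg_cong[OF c1, of "of_real :: real \<Rightarrow> complex"] bb by (simp add: mult.commute)
      have c2c: "cnj b * b + of_real dr * of_real (m - ar) = of_real (m - ar) * (of_real m :: complex)"
        using arg_cong[OF c2, of "of_real :: real \<Rightarrow> complex"] bb by (simp add: mult.commute)
      show ?thesis unfolding P V'_def ar dr hb
        using c1c c2c by (simp add: algebra_simps)
    qed
    have DN: "mat2 (of_real l) 0 0 (of_real m) ** N = N ** mat2 (of_real l) 0 0 (of_real m)"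
      unfolding N_def by (simp add: mult.commute)
    have "P ** V = (P ** V') ** N" unfolding V_def by (simp add: matrix_mul_assoc)
    also have "\<dots> = V' ** (mat2 (of_real l) 0 0 (of_real m) ** N)" unfolding PV' by (simp add: matrix_mul_assoc)
    also have "\<dots> = V ** mat2 (of_real l) 0 0 (of_real m)" unfolding DN V_def by (simp add: matrix_mul_assoc)
    finally have "P ** V = V ** mat2 (of_real l) 0 0 (of_real m)" .
    then have PVD: "P ** V = V ** mat2 (of_real l) 0 0 (of_real m)" .
    have "P = P ** (V ** adj V)" using unitary2_right[OF uV] by simp
    also have "\<dots> = (P ** V) ** adj V" by (simp add: matrix_mul_assoc)
    finally have "P = V ** mat2 (of_real l) 0 0 (of_real m) ** adj V" unfolding PVD .
    then show ?thesis using uV lp mp by blast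
  qed
qed



lemma conj_distrib_lemma:
  "V ** (csmult g D + csmult k (mat 1)) ** adj V = csmult g (V ** D ** adj V) + csmult k (V ** adj V)"
  by (rule mat2_cases[of V], rule mat2_cases[of D]) (simp add: mat1_mat2 algebra_simps)

lemma spec_unique:
  assumes uV: "unitary2 V" and l1p: "l1 > 0" and l2p: "l2 > 0"
    and PV: "P = V ** mat2 (of_real l1) 0 0 (of_real l2) ** adj V"
    and dP: "det P = 1" and tP: "P$1$1 + P$2$2 = of_real (l + 1/l)" and l: "l \<ge> 1"
  shows "V ** mat2 (of_real (l1 powr h)) 0 0 (of_real (l2 powr h)) ** adj V
     = csmult (of_real (ga l h)) P + csmult (of_real (gb l h)) (mat 1)"
proof -
  obtain x y z w where V: "V = mat2 x y z w" by (rule mat2_cases)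
  have "adj V ** V = mat 1" using uV by (simp add: unitary2_def)
  then have n1: "cnj x * x + cnj z * z = 1" and n2: "cnj y * y + cnj w * w = 1"
    unfolding V by (simp_all add: mat1_mat2)
  have "P$1$1 + P$2$2 = of_real l1 * (cnj x * x + cnj z * z) + of_real l2 * (cnj y * y + cnj w * w)"
    unfolding PV V by (simp add: algebra_simps)
  then have "of_real (l1 + l2) = (of_real (l + 1/l) :: complex)" using tP n1 n2 by simp
  then have s12: "l1 + l2 = l + 1/l" using of_real_eq_iff by blast
  have dV: "cnj (det V) * det V = 1"
    using arg_cong[OF \<open>adj V ** V = mat 1\<close>, of det] by (simp add: det_mul det_adj)
  have "det P = of_real (l1 * l2) * (cnj (det V) * det V)"
    unfolding PV det_mul det_adj by (simp add: algebra_simps)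
  then have "of_real (l1 * l2) = (1::complex)" using dP dV by simp
  then have p12: "l1 * l2 = 1" using of_real_eq_1_iff by blast
  have lp: "l > 0" using l by simp
  define il where "il = 1/l"
  have lil: "l * il = 1" unfolding il_def using lp by simp
  have "(l1 - l) * (l1 - il) = l1*l1 - l1*(l + il) + l*il" by (simp add: algebra_simps)
  also have "\<dots> = 0" unfolding il_def s12[symmetric] lil[unfolded il_def] using p12 by (simp add: algebra_simps)
  finally have "(l1 - l) * (l1 - 1/l) = 0" unfolding il_def .
  then have "l1 = l \<or> l1 = 1/l" by simp
  then have "(l1 = l \<and> l2 = 1/l) \<or> (l1 = 1/l \<and> l2 = l)" using s12 by auto
  then have e1: "ga l h * l1 + gb l h = l1 powr h" and e2: "ga l h * l2 + gb l h = l2 powr h"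
    using ga_gb[OF l, of h] by (auto simp: mult.commute)
  have diag: "mat2 (of_real (l1 powr h)) 0 0 (of_real (l2 powr h)) =
      csmult (of_real (ga l h)) (mat2 (of_real l1) 0 0 (of_real l2)) + csmult (of_real (gb l h)) (mat 1)"
    unfolding e1[symmetric] e2[symmetric] by (simp add: mat1_mat2 mult.commute)
  show ?thesis unfolding diag conj_distrib_lemma PV[symmetric] unitary2_right[OF uV] ..
qed

lemma pdpow_eq:
  assumes dM: "det M = 1"
  shows "pdpow (P0 M) h = csmult (of_real (ga (lam (sqn M)) h)) (P0 M) + csmult (of_real (gb (lam (sqn M)) h)) (mat 1)"
proof -
  define l where "l = lam (sqn M)"
  have l1: "l \<ge> 1" and lt: "l + 1/l = tau M"
    using lam_props[OF sqn_ge2[OF dM]] unfolding l_def tau_def by auto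
  have tP: "(P0 M)$1$1 + (P0 M)$2$2 = of_real (l + 1/l)" unfolding lt by (rule tr_P0[OF dM])
  show ?thesis unfolding pdpow_def l_def[symmetric]
  proof (rule the_equality)
    obtain V l1 l2 where "unitary2 V" "0 < l1" "0 < l2" "P0 M = V ** mat2 (of_real l1) 0 0 (of_real l2) ** adj V"
      using spec_exists[OF P0_herm det_P0[OF dM] tP l1] by blast
    then show "\<exists>V l1 l2. unitary2 V \<and> 0 < l1 \<and> 0 < l2 \<and>
      P0 M = V ** mat2 (of_real l1) 0 0 (of_real l2) ** adj V \<and>
      csmult (of_real (ga l h)) (P0 M) + csmult (of_real (gb l h)) (mat 1) =
        V ** mat2 (of_real (l1 powr h)) 0 0 (of_real (l2 powr h)) ** adj V"
      using spec_unique[OF _ _ _ _ det_P0[OF dM] tP l1] by metis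
  next
    fix Q assume "\<exists>V l1 l2. unitary2 V \<and> 0 < l1 \<and> 0 < l2 \<and>
      P0 M = V ** mat2 (of_real l1) 0 0 (of_real l2) ** adj V \<and>
      Q = V ** mat2 (of_real (l1 powr h)) 0 0 (of_real (l2 powr h)) ** adj V"
    then show "Q = csmult (of_real (ga l h)) (P0 M) + csmult (of_real (gb l h)) (mat 1)"
      using spec_unique[OF _ _ _ _ det_P0[OF dM] tP l1] by metis
  qed
qed



definition FF :: "real \<Rightarrow> cmat2 \<Rightarrow> cmat2" where
  "FF h M = csmult (of_real (tau M * ga (lam (sqn M)) h)) M + csmult (of_real (gb (lam (sqn M)) h)) (M + ac M)"

lemma distr2: "(csmult a X + csmult b (mat 1)) ** Y = csmult a (X ** Y) + csmult b Y"
  by (rule mat2_cases[of X], rule mat2_cases[of Y]) (simp add: mat1_mat2 algebra_simps)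

lemma polar_formula:
  assumes dM: "det M = 1"
  shows "csmult (of_real (tau M)) (polar_rep h M) = FF h M"
proof -
  define a where "a = ga (lam (sqn M)) h"
  define b where "b = gb (lam (sqn M)) h"
  have t: "tau M > 0" using tau_pos[OF dM] .
  have "polar_rep h M = csmult (of_real a) M + csmult (of_real b) (U0 M)"
    unfolding polar_rep_eq[OF dM] pdpow_eq[OF dM] distr2 P0U0[OF dM] a_def b_def ..
  have U: "csmult (of_real (tau M)) (U0 M) = M + ac M"
    unfolding U0_def csmult_csmult using t by (simp add: csmult_one)
  have "csmult (of_real (tau M)) (polar_rep h M) = csmult (of_real (tau M) * of_real a) M + csmult (of_real b) (csmult (of_real (tau M)) (U0 M))"
    unfolding \<open>polar_rep h M = _\<close> csmult_add csmult_csmult by (simp add: mult.commute)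
  then show ?thesis unfolding U FF_def a_def b_def by simp
qed

lemma sqn_csmult: "cmod c = 1 \<Longrightarrow> sqn (csmult c M) = sqn M"
  by (simp add: sqn_def norm_mult)

lemma tau_csmult: "cmod c = 1 \<Longrightarrow> tau (csmult c M) = tau M"
  by (simp add: tau_def sqn_csmult)

lemma ac_csmult: "ac (csmult c M) = csmult (cnj c) (ac M)"
  by (rule mat2_cases[of M]) (simp add: ac_def)

lemma ac_add: "ac (X + Y) = ac X + ac Y"
  by (rule mat2_cases[of X], rule mat2_cases[of Y]) (simp add: ac_def)

lemma FF_sign: assumes "c = 1 \<or> c = -1" shows "FF h (csmult c M) = csmult c (FF h M)"
proof -
  have "cmod c = 1" "cnj c = c" using assms by auto
  then show ?thesis unfolding FF_def sqn_csmult[OF \<open>cmod c = 1\<close>] tau_csmult[OF \<open>cmod c = 1\<close>]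
    ac_csmult csmult_add csmult_csmult by (simp add: mult.commute)
qed

lemma pclass_self: "M \<in> pclass M"
  unfolding pclass_def by (rule CollectI, rule exI[of _ 1]) (simp add: csmult_one)

lemma FF_mem:
  assumes dA: "det A = 1" and c0: "c0 \<noteq> 0"
  shows "csmult c0 (FF h A) \<in> Rtilde h (pclass A)"
proof -
  define A' where "A' = (SOME A'. det A' = 1 \<and> pclass A = pclass A')"
  have "\<exists>A'. det A' = 1 \<and> pclass A = pclass A'" using dA by blast
  from someI_ex[OF this] have A': "det A' = 1" "pclass A = pclass A'" unfolding A'_def by blast+
  have "A \<in> pclass A'" using pclass_self[of A] A'(2) by simp
  then obtain c where c: "c \<noteq> 0" "A = csmult c A'" unfolding pclass_def by blast
  have "c^2 = 1" using dA A'(1) c(2) by (simp add: det_csmult)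
  then have pm: "c = 1 \<or> c = -1" by (simp add: power2_eq_1_iff)
  have t: "tau A' > 0" using tau_pos[OF A'(1)] .
  have "csmult c0 (FF h A) = csmult (c0 * c * of_real (tau A')) (polar_rep h A')"
    unfolding c(2) FF_sign[OF pm] polar_formula[OF A'(1), symmetric] csmult_csmult
    by (simp add: mult.assoc)
  moreover have "c0 * c * of_real (tau A') \<noteq> 0" using c0 c(1) t by simp
  ultimately have "csmult c0 (FF h A) \<in> pclass (polar_rep h A')" unfolding pclass_def by blast
  then show ?thesis unfolding Rtilde_def A'_def by simp
qed

lemma tendsto_mat2:
  assumes "(a \<longlongrightarrow> a0) F" "(b \<longlongrightarrow> b0) F" "(c \<longlongrightarrow> c0) F" "(d \<longlongrightarrow> d0) F"
  shows "((\<lambda>t. mat2 (a t) (b t) (c t) (d t)) \<longlongrightarrow> mat2 a0 b0 c0 d0) F"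
proof (rule vec_tendstoI)
  fix i :: 2
  show "((\<lambda>t. mat2 (a t) (b t) (c t) (d t) $ i) \<longlongrightarrow> mat2 a0 b0 c0 d0 $ i) F"
  proof (rule vec_tendstoI)
    fix j :: 2
    show "((\<lambda>t. mat2 (a t) (b t) (c t) (d t) $ i $ j) \<longlongrightarrow> mat2 a0 b0 c0 d0 $ i $ j) F"
      using exhaust_2[of i] exhaust_2[of j] assms by auto
  qed
qed

lemma tendsto_csmult:
  assumes "(g \<longlongrightarrow> c) F" "(X \<longlongrightarrow> L) F"
  shows "((\<lambda>t. csmult (g t) (X t)) \<longlongrightarrow> csmult c L) F"
proof -
  have e: "\<And>M. M = mat2 (M$1$1) (M$1$2) (M$2$1) (M$2$2)" by (rule mat2_eta)
  have "((\<lambda>t. mat2 (g t * X t $1$1) (g t * X t $1$2) (g t * X t $2$1) (g t * X t $2$2))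
     \<longlongrightarrow> mat2 (c * L$1$1) (c * L$1$2) (c * L$2$1) (c * L$2$2)) F"
    by (intro tendsto_mat2 tendsto_mult assms tendsto_vec_nth)
  moreover have "\<And>t. csmult (g t) (X t) = mat2 (g t * X t $1$1) (g t * X t $1$2) (g t * X t $2$1) (g t * X t $2$2)"
    by (subst e) simp
  moreover have "csmult c L = mat2 (c * L$1$1) (c * L$1$2) (c * L$2$1) (c * L$2$2)"
    by (subst e) simp
  ultimately show ?thesis by simp
qed

lemma ac_eq: "ac M = mat2 (cnj (M$2$2)) (- cnj (M$2$1)) (- cnj (M$1$2)) (cnj (M$1$1))"
  by (subst mat2_eta[of M]) (simp add: ac_def)

lemma tendsto_ac:
  assumes "(X \<longlongrightarrow> L) F"
  shows "((\<lambda>t. ac (X t)) \<longlongrightarrow> ac L) F"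
  unfolding ac_eq by (intro tendsto_mat2 tendsto_cnj tendsto_minus tendsto_vec_nth assms)

lemma tendsto_sqn:
  assumes "(X \<longlongrightarrow> L) F"
  shows "((\<lambda>t. sqn (X t)) \<longlongrightarrow> sqn L) F"
  unfolding sqn_def by (intro tendsto_add tendsto_power tendsto_norm tendsto_vec_nth assms)

lemma tendsto_det:
  fixes X :: "'b \<Rightarrow> cmat2"
  assumes "(X \<longlongrightarrow> L) F"
  shows "((\<lambda>t. det (X t)) \<longlongrightarrow> det L) F"
  unfolding det_2 by (intro tendsto_diff tendsto_mult tendsto_vec_nth assms)



lemma sinh_le:
  fixes h u :: real
  assumes h0: "0 \<le> h" and h1: "h \<le> 1" and u0: "0 \<le> u"
  shows "sinh (h*u) \<le> h * sinh u"
proof -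
  define f where "f v = h * sinh v - sinh (h * v)" for v :: real
  have "f 0 \<le> f u"
  proof (rule DERIV_nonneg_imp_nondecreasing[OF u0])
    fix x :: real assume x: "0 \<le> x" "x \<le> u"
    have D: "DERIV f x :> h * cosh x - cosh (h*x) * h"
      unfolding f_def by (auto intro!: derivative_eq_intros)
    have "cosh (h*x) \<le> cosh x"
    proof (cases "h*x < x")
      case True then show ?thesis using cosh_real_strict_mono[of "h*x" x] h0 x by simp
    next
      case False then have hx: "h*x = x" using mult_left_le_one_le[OF x(1) h0 h1] by simp
      show ?thesis unfolding hx by simp
    qed
    then have "0 \<le> h * cosh x - cosh (h*x) * h" using h0 by (simp add: algebra_simps mult_left_mono)
    then show "\<exists>y. DERIV f x :> y \<and> 0 \<le> y" using D by blast
  qed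
  then show ?thesis unfolding f_def by simp
qed

lemma exp_diff_sinh: "exp x - exp (-x) = 2 * sinh (x::real)"
  by (simp add: sinh_def)

lemma ga_bound:
  assumes l: "l \<ge> 1" and h0: "0 \<le> h" and h1: "h \<le> 1"
  shows "0 \<le> ga l h \<and> ga l h \<le> h"
proof (cases "l = 1")
  case True then show ?thesis by (simp add: ga_def h0)
next
  case False
  then have l1: "l > 1" using l by simp
  define u where "u = ln l"
  have up: "u > 0" unfolding u_def using l1 by simp
  have e1: "l powr h - l powr (-h) = 2 * sinh (h*u)"
    using l1 unfolding u_def by (simp add: powr_def exp_diff_sinh[symmetric])
  have e2: "l - 1/l = 2 * sinh u"
    using l1 unfolding u_def by (simp add: exp_diff_sinh[symmetric] exp_minus inverse_eq_divide)
  have sp: "sinh u > 0" using up by simp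
  have g: "ga l h = sinh (h*u) / sinh u" unfolding ga_def using False e1 e2 by simp
  have "sinh (h*u) \<ge> 0" using h0 up by simp
  moreover have "sinh (h*u) \<le> h * sinh u" using sinh_le[OF h0 h1] up by simp
  ultimately show ?thesis unfolding g using sp by (simp add: divide_le_eq)
qed



lemma scalar_main:
  fixes n S :: "real \<Rightarrow> real" and \<alpha> nB :: real
  assumes a0: "\<alpha> \<ge> 0" and nlim: "(n \<longlongrightarrow> nB) at_top" and nB: "nB > 0"
    and S: "\<forall>t>1. S t = t powr (2*\<alpha>) * n t" and S2: "\<forall>t>1. S t \<ge> 2"
  shows "((\<lambda>t. sqrt (S t + 2) * ga (lam (S t)) (1/ln t)) \<longlongrightarrow> exp \<alpha> - exp (-\<alpha>)) at_top"
    and "((\<lambda>t. gb (lam (S t)) (1/ln t)) \<longlongrightarrow> exp (-\<alpha>)) at_top"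
proof -
  define l where "l t = lam (S t)" for t
  have ev1: "eventually (\<lambda>t. t > (1::real)) at_top" by (rule eventually_gt_at_top)
  have lp: "l t \<ge> 1" "l t + 1 / l t = sqrt (S t + 2)" "(l t)^2 \<le> S t" "(l t)^2 \<ge> S t / 2" if "t > 1" for t
    using lam_props[of "S t"] S2 that unfolding l_def by auto
  have npos: "n t > 0" if "t > 1" for t
  proof -
    have "0 < S t" using S2 that by force
    then show ?thesis using S that by (simp add: zero_less_mult_iff)
  qed
  have lnS: "ln (S t) = 2*\<alpha>*ln t + ln (n t)" if "t > 1" for t
    using S that npos[OF that] by (simp add: ln_mult)
  have ilt: "((\<lambda>t::real. inverse (ln t)) \<longlongrightarrow> 0) at_top"
    by (rule tendsto_inverse_0_at_top[OF ln_at_top])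
  have lnn: "((\<lambda>t. ln (n t)) \<longlongrightarrow> ln nB) at_top" using nB by (intro tendsto_intros nlim) simp
  have A: "((\<lambda>t. ln (l t) / ln t) \<longlongrightarrow> \<alpha>) at_top"
  proof (rule tendsto_sandwich)
    show "((\<lambda>t. \<alpha> + (ln (n t) - ln 2) * inverse (ln t) / 2) \<longlongrightarrow> \<alpha>) at_top"
      using tendsto_add[OF tendsto_const[of \<alpha>] tendsto_divide[OF tendsto_mult[OF tendsto_diff[OF lnn tendsto_const[of "ln 2"]] ilt] tendsto_const[of 2]]]
      by simp
    show "((\<lambda>t. \<alpha> + ln (n t) * inverse (ln t) / 2) \<longlongrightarrow> \<alpha>) at_top"
      using tendsto_add[OF tendsto_const[of \<alpha>] tendsto_divide[OF tendsto_mult[OF lnn ilt] tendsto_const[of 2]]]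
      by simp
    show "eventually (\<lambda>t. \<alpha> + (ln (n t) - ln 2) * inverse (ln t) / 2 \<le> ln (l t) / ln t) at_top"
      using ev1
    proof eventually_elim
      case (elim t)
      have l0: "l t > 0" using lp(1)[OF elim] by simp
      have "ln (S t / 2) \<le> ln ((l t)^2)"
        using lp(4)[OF elim] S2 elim l0 by (subst ln_le_cancel_iff) auto
      moreover have "S t \<noteq> 0" using S2 elim by force
      ultimately have "2*\<alpha>*ln t + ln (n t) - ln 2 \<le> 2 * ln (l t)"
        using lnS[OF elim] l0 by (simp add: ln_div ln_realpow)
      moreover have lt: "ln t > 0" using elim by simp
      ultimately have "(2*\<alpha>*ln t + ln (n t) - ln 2) / (2 * ln t) \<le> (2 * ln (l t)) / (2 * ln t)"
        by (intro divide_right_mono) simp_all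
      moreover have "\<alpha> + (ln (n t) - ln 2) * inverse (ln t) / 2 = (2*\<alpha>*ln t + ln (n t) - ln 2) / (2 * ln t)"
        using lt by (simp add: field_simps)
      ultimately show ?case by simp
    qed
    show "eventually (\<lambda>t. ln (l t) / ln t \<le> \<alpha> + ln (n t) * inverse (ln t) / 2) at_top"
      using ev1
    proof eventually_elim
      case (elim t)
      have l0: "l t > 0" using lp(1)[OF elim] by simp
      have "ln ((l t)^2) \<le> ln (S t)"
        using lp(3)[OF elim] S2 elim l0 by (subst ln_le_cancel_iff) auto
      then have "2 * ln (l t) \<le> 2*\<alpha>*ln t + ln (n t)"
        using lnS[OF elim] l0 by (simp add: ln_realpow)
      moreover have lt: "ln t > 0" using elim by simp
      ultimately have "(2 * ln (l t)) / (2 * ln t) \<le> (2*\<alpha>*ln t + ln (n t)) / (2 * ln t)"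
        by (intro divide_right_mono) simp_all
      moreover have "\<alpha> + ln (n t) * inverse (ln t) / 2 = (2*\<alpha>*ln t + ln (n t)) / (2 * ln t)"
        using lt by (simp add: field_simps)
      ultimately show ?case by simp
    qed
  qed
  have Xe: "l t powr (1/ln t) = exp (ln (l t) / ln t)" "l t powr (-(1/ln t)) = exp (- (ln (l t) / ln t))"
    if "t > 1" for t
    using lp(1)[OF that] by (simp_all add: powr_def)
  have evX: "eventually (\<lambda>t. exp (ln (l t) / ln t) = l t powr (1/ln t)) at_top"
    using ev1 by eventually_elim (simp add: Xe)
  have evY: "eventually (\<lambda>t. exp (- (ln (l t) / ln t)) = l t powr (-(1/ln t))) at_top"
    using ev1 by eventually_elim (simp add: Xe)
  have X: "((\<lambda>t. l t powr (1/ln t)) \<longlongrightarrow> exp \<alpha>) at_top"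
    using tendsto_exp[OF A] evX by (rule Lim_transform_eventually)
  have Y: "((\<lambda>t. l t powr (-(1/ln t))) \<longlongrightarrow> exp (-\<alpha>)) at_top"
    using tendsto_exp[OF tendsto_minus[OF A]] evY by (rule Lim_transform_eventually)
  show G1: "((\<lambda>t. sqrt (S t + 2) * ga (lam (S t)) (1/ln t)) \<longlongrightarrow> exp \<alpha> - exp (-\<alpha>)) at_top"
  proof (cases "\<alpha> = 0")
    case True
    have evn: "eventually (\<lambda>t. n t < nB + 1) at_top" using order_tendstoD(2)[OF nlim, of "nB + 1"] by simp
    have eve: "eventually (\<lambda>t::real. t \<ge> exp 1) at_top" by (rule eventually_ge_at_top)
    have "((\<lambda>t. sqrt (S t + 2) * ga (lam (S t)) (1/ln t)) \<longlongrightarrow> 0) at_top"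
    proof (rule tendsto_sandwich[of "\<lambda>t. 0" _ _ "\<lambda>t. sqrt (nB + 3) * inverse (ln t)"])
      show "eventually (\<lambda>t. 0 \<le> sqrt (S t + 2) * ga (lam (S t)) (1/ln t)) at_top"
        using ev1 eve evn
      proof eventually_elim
        case (elim t)
        have lt: "ln t \<ge> 1" using ln_le_cancel_iff[of "exp 1" t] elim(1,2) by simp
        have "0 \<le> ga (lam (S t)) (1/ln t)" using ga_bound[of "lam (S t)" "1/ln t"] lp(1)[OF elim(1)] lt
          unfolding l_def by simp
        moreover have "S t \<ge> 2" using S2 elim(1) by simp
        ultimately show ?case by simp
      qed
      show "eventually (\<lambda>t. sqrt (S t + 2) * ga (lam (S t)) (1/ln t) \<le> sqrt (nB + 3) * inverse (ln t)) at_top"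
        using ev1 eve evn
      proof eventually_elim
        case (elim t)
        have lt: "ln t \<ge> 1" using ln_le_cancel_iff[of "exp 1" t] elim(1,2) by simp
        have g: "0 \<le> ga (lam (S t)) (1/ln t) \<and> ga (lam (S t)) (1/ln t) \<le> 1/ln t"
          using ga_bound[of "lam (S t)" "1/ln t"] lp(1)[OF elim(1)] lt unfolding l_def by simp
        have "S t = n t" using S elim(1) True by simp
        then have "sqrt (S t + 2) \<le> sqrt (nB + 3)" using elim(3) by simp
        then have "sqrt (S t + 2) * ga (lam (S t)) (1/ln t) \<le> sqrt (nB + 3) * (1/ln t)"
          using g nB by (intro mult_mono) simp_all
        then show ?case by (simp add: inverse_eq_divide)
      qed
      show "((\<lambda>t. sqrt (nB + 3) * inverse (ln t)) \<longlongrightarrow> 0) at_top"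
        using tendsto_mult[OF tendsto_const[of "sqrt (nB + 3)"] ilt] by simp
    qed simp
    then show ?thesis using True by simp
  next
    case False
    then have ap: "\<alpha> > 0" using a0 by simp
    define q where "q t = inverse ((l t)^2)" for t
    have tp: "((\<lambda>t::real. t powr (-(2*\<alpha>))) \<longlongrightarrow> 0) at_top"
      by (rule tendsto_neg_powr) (use ap in \<open>simp_all add: filterlim_ident\<close>)
    have q0: "(q \<longlongrightarrow> 0) at_top"
    proof (rule tendsto_sandwich[of "\<lambda>t. 0" _ _ "\<lambda>t. 2 * t powr (-(2*\<alpha>)) * inverse (n t)"])
      show "eventually (\<lambda>t. 0 \<le> q t) at_top" by (simp add: q_def)
      show "eventually (\<lambda>t. q t \<le> 2 * t powr (-(2*\<alpha>)) * inverse (n t)) at_top"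
        using ev1
      proof eventually_elim
        case (elim t)
        have Sp: "S t > 0" using S2 elim by force
        have "S t / 2 \<le> (l t)^2" using lp(4)[OF elim] .
        then have "inverse ((l t)^2) \<le> inverse (S t / 2)" using Sp by (intro le_imp_inverse_le) simp_all
        also have "\<dots> = 2 * t powr (-(2*\<alpha>)) * inverse (n t)"
          using S elim by (simp add: powr_minus field_simps)
        finally show ?case unfolding q_def .
      qed
      show "((\<lambda>t. 2 * t powr (-(2*\<alpha>)) * inverse (n t)) \<longlongrightarrow> 0) at_top"
        using tendsto_mult[OF tendsto_mult[OF tendsto_const[of 2] tp] tendsto_inverse[OF nlim]] nB by simp
    qed simp
    have evq: "eventually (\<lambda>t. q t < 1) at_top" using order_tendstoD(2)[OF q0, of 1] by simp
    have L: "((\<lambda>t. (l t powr (1/ln t) - l t powr (-(1/ln t))) * (1 + q t) / (1 - q t))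
        \<longlongrightarrow> (exp \<alpha> - exp (-\<alpha>)) * (1 + 0) / (1 - 0)) at_top"
      by (intro tendsto_intros X Y q0) simp
    have E: "eventually (\<lambda>t. (l t powr (1/ln t) - l t powr (-(1/ln t))) * (1 + q t) / (1 - q t)
        = sqrt (S t + 2) * ga (lam (S t)) (1/ln t)) at_top"
      using ev1 evq
    proof eventually_elim
      case (elim t)
      have l1: "l t \<ge> 1" using lp(1)[OF elim(1)] .
      have ll: "(l t)^2 > 1" using elim(2) l1 unfolding q_def by (simp add: field_simps)
      then have ln1: "l t \<noteq> 1" by auto
      have lne: "l t * l t \<noteq> 1" using ll by (simp add: power2_eq_square)
      have "sqrt (S t + 2) * ga (lam (S t)) (1/ln t) = (l t + 1 / l t) * ((l t powr (1/ln t) - l t powr (-(1/ln t))) / (l t - 1 / l t))"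
        using lp(2)[OF elim(1)] ln1 unfolding ga_def l_def by simp
      also have "\<dots> = (l t powr (1/ln t) - l t powr (-(1/ln t))) * (1 + q t) / (1 - q t)"
        unfolding q_def using l1 lne by (simp add: field_simps power2_eq_square)
      finally show ?case by simp
    qed
    show ?thesis using Lim_transform_eventually[OF L E] by simp
  qed
  show "((\<lambda>t. gb (lam (S t)) (1/ln t)) \<longlongrightarrow> exp (-\<alpha>)) at_top"
  proof -
    have L: "((\<lambda>t. ((l t powr (1/ln t) + l t powr (-(1/ln t))) - sqrt (S t + 2) * ga (lam (S t)) (1/ln t)) / 2)
       \<longlongrightarrow> ((exp \<alpha> + exp (-\<alpha>)) - (exp \<alpha> - exp (-\<alpha>))) / 2) at_top"
      by (intro tendsto_intros X Y G1) simp_all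
    have E: "eventually (\<lambda>t. ((l t powr (1/ln t) + l t powr (-(1/ln t))) - sqrt (S t + 2) * ga (lam (S t)) (1/ln t)) / 2
          = gb (lam (S t)) (1/ln t)) at_top"
        using ev1 by eventually_elim (simp add: gb_def l_def lp(2)[unfolded l_def])
    have C: "((exp \<alpha> + exp (-\<alpha>)) - (exp \<alpha> - exp (-\<alpha>))) / 2 = exp (-\<alpha>)" by simp
    show ?thesis using Lim_transform_eventually[OF L E] unfolding C .
  qed
qed



lemma sqn_csmult2: "sqn (csmult c M) = (cmod c)^2 * sqn M"
  by (simp add: sqn_def norm_mult power_mult_distrib algebra_simps)

lemma det_T:
  "det (csmult (of_real x) B + csmult (of_real y) (adj (cofm B))) =
     of_real (x^2) * det B + of_real (x * y * sqn B) + of_real (y^2) * cnj (det B)"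
proof -
  obtain p q r w where B: "B = mat2 p q r w" by (rule mat2_cases)
  have S: "of_real (sqn B) = p*cnj p + q*cnj q + r*cnj r + w*cnj w" using B sqn_mat2_c by simp
  show ?thesis unfolding B using S[unfolded B] by (simp add: power2_eq_square algebra_simps)
qed

lemma sqn_pos: "B \<noteq> 0 \<Longrightarrow> sqn B > 0"
proof -
  assume "B \<noteq> 0"
  obtain p q r w where B: "B = mat2 p q r w" by (rule mat2_cases)
  have "p \<noteq> 0 \<or> q \<noteq> 0 \<or> r \<noteq> 0 \<or> w \<noteq> 0" using \<open>B \<noteq> 0\<close> unfolding B zero_mat2 by auto
  then have "(cmod p)^2 > 0 \<or> (cmod q)^2 > 0 \<or> (cmod r)^2 > 0 \<or> (cmod w)^2 > 0" by auto
  moreover have "0 \<le> (cmod p)^2" "0 \<le> (cmod q)^2" "0 \<le> (cmod r)^2" "0 \<le> (cmod w)^2" by simp_all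
  moreover have "sqn B = (cmod p)^2 + (cmod q)^2 + (cmod r)^2 + (cmod w)^2" unfolding B sqn_def by simp
  ultimately show ?thesis by linarith
qed

lemma T_limit_eq: "csmult (of_real (x - y)) B + csmult (of_real y) (B + ac B) =
    csmult (of_real x) B + csmult (of_real y) (adj (cofm B))"
  by (rule mat2_cases[of B]) (simp add: ac_def algebra_simps)

theorem lemma3p1:
  fixes A :: "real \<Rightarrow> cmat2" and B :: cmat2 and \<alpha> :: real
  assumes "\<forall>t>1. det (A t) = 1"
    and "B \<noteq> 0"
    and "((\<lambda>t. csmult (of_real (t powr (- \<alpha>))) (A t)) \<longlongrightarrow> B) at_top"
  shows "pclass (csmult (of_real (exp \<alpha>)) B + csmult (of_real (exp (- \<alpha>))) (adj (cofm B))) \<in> PSL2 \<and>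
    proj_tendsto (\<lambda>t. Rtilde (1 / ln t) (pclass (A t)))
      (pclass (csmult (of_real (exp \<alpha>)) B + csmult (of_real (exp (- \<alpha>))) (adj (cofm B)))) at_top"
proof -
  note det1 = assms(1) and Bnz = assms(2) and lim = assms(3)
  define N where "N t = csmult (of_real (t powr (- \<alpha>))) (A t)" for t
  define T where "T = csmult (of_real (exp \<alpha>)) B + csmult (of_real (exp (- \<alpha>))) (adj (cofm B))"
  have Nlim: "(N \<longlongrightarrow> B) at_top" using lim unfolding N_def .
  have ev1: "eventually (\<lambda>t. t > (1::real)) at_top" by (rule eventually_gt_at_top)
  have detN: "det (N t) = of_real (t powr (-2*\<alpha>))" if "t > 1" for t
  proof -
    have "(t powr (-\<alpha>))^2 = t powr (-2*\<alpha>)" using that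
      by (simp add: power2_eq_square powr_add[symmetric])
    then show ?thesis unfolding N_def det_csmult using det1 that
      by (simp flip: of_real_power)
  qed
  have detlim: "((\<lambda>t. det (N t)) \<longlongrightarrow> det B) at_top" by (rule tendsto_det[OF Nlim])
  have sqnB: "sqn B > 0" using sqn_pos[OF Bnz] .
  have a0: "\<alpha> \<ge> 0"
  proof (rule ccontr)
    assume "\<not> \<alpha> \<ge> 0"
    then have an: "\<alpha> < 0" by simp
    have t1: "((\<lambda>t::real. t powr (2*\<alpha>)) \<longlongrightarrow> 0) at_top"
      by (rule tendsto_neg_powr) (use an in \<open>simp_all add: filterlim_ident\<close>)
    have E: "eventually (\<lambda>t. Re (det (N t)) = t powr (-2*\<alpha>)) at_top"
      using ev1 by eventually_elim (simp add: detN)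
    have t2: "((\<lambda>t::real. t powr (-2*\<alpha>)) \<longlongrightarrow> Re (det B)) at_top"
      using Lim_transform_eventually[OF tendsto_Re[OF detlim] E] .
    have "((\<lambda>t::real. t powr (2*\<alpha>) * t powr (-2*\<alpha>)) \<longlongrightarrow> 0 * Re (det B)) at_top"
      by (rule tendsto_mult[OF t1 t2])
    moreover have "eventually (\<lambda>t::real. t powr (2*\<alpha>) * t powr (-2*\<alpha>) = 1) at_top"
      using ev1 by eventually_elim (simp add: powr_add[symmetric])
    ultimately have "((\<lambda>t::real. 1) \<longlongrightarrow> 0 * Re (det B)) at_top"
      using Lim_transform_eventually by fastforce
    then have "(1::real) = 0 * Re (det B)"
      using tendsto_unique[OF trivial_limit_at_top_linorder tendsto_const] by blast
    then show False by simp
  qed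
  have dT: "det T \<noteq> 0"
  proof (cases "\<alpha> = 0")
    case True
    have E: "eventually (\<lambda>t. 1 = det (N t)) at_top" using ev1 by eventually_elim (simp add: detN True)
    have "((\<lambda>t. det (N t)) \<longlongrightarrow> 1) at_top" using Lim_transform_eventually[OF tendsto_const E]
      by simp
    then have "det B = 1" using tendsto_unique[OF _ detlim] by fastforce
    then have "det T = of_real (2 + sqn B)" unfolding T_def det_T True by simp
    moreover have "2 + sqn B \<noteq> 0" using sqnB by simp
    ultimately show ?thesis by (metis of_real_eq_0_iff)
  next
    case False
    then have ap: "\<alpha> > 0" using a0 by simp
    have t1: "((\<lambda>t::real. t powr (-2*\<alpha>)) \<longlongrightarrow> 0) at_top"
      by (rule tendsto_neg_powr) (use ap in \<open>simp_all add: filterlim_ident\<close>)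
    have E: "eventually (\<lambda>t. of_real (t powr (-2*\<alpha>)) = det (N t)) at_top"
      using ev1 by eventually_elim (simp add: detN)
    have "((\<lambda>t. det (N t)) \<longlongrightarrow> of_real 0) at_top"
      using Lim_transform_eventually[OF tendsto_of_real[OF t1] E] .
    then have "det B = 0" using tendsto_unique[OF _ detlim] by fastforce
    then have "det T = of_real (exp \<alpha> * exp (-\<alpha>) * sqn B)" unfolding T_def det_T by simp
    then show ?thesis using sqnB by simp
  qed
  have Tnz: "T \<noteq> 0" using dT by (metis det_mat2 mult_zero_left diff_zero zero_mat2)
  have PSL: "pclass T \<in> PSL2" unfolding PSL2_def using dT by blast
  define f where "f t = csmult (of_real (t powr (- \<alpha>))) (FF (1 / ln t) (A t))" for t
  have mem: "eventually (\<lambda>t. f t \<in> Rtilde (1 / ln t) (pclass (A t))) at_top"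
    using ev1 by eventually_elim (use det1 in \<open>auto simp: f_def intro!: FF_mem\<close>)
  define S where "S t = sqn (A t)" for t
  have AN: "A t = csmult (of_real (t powr \<alpha>)) (N t)" if "t > 1" for t
  proof -
    have "of_real (t powr \<alpha>) * of_real (t powr (-\<alpha>)) = (1::complex)"
      using that by (simp flip: of_real_mult powr_add)
    then show ?thesis unfolding N_def csmult_csmult by (simp add: csmult_one)
  qed
  have SN: "\<forall>t>1. S t = t powr (2*\<alpha>) * sqn (N t)"
  proof (intro allI impI)
    fix t :: real assume t: "t > 1"
    have "(t powr \<alpha>)^2 = t powr (2*\<alpha>)" using t by (simp add: power2_eq_square powr_add[symmetric])
    then show "S t = t powr (2*\<alpha>) * sqn (N t)" unfolding S_def AN[OF t] sqn_csmult2 using t by simp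
  qed
  have S2: "\<forall>t>1. S t \<ge> 2" unfolding S_def using det1 sqn_ge2 by blast
  have nlim: "((\<lambda>t. sqn (N t)) \<longlongrightarrow> sqn B) at_top" by (rule tendsto_sqn[OF Nlim])
  note sc = scalar_main[OF a0 nlim sqnB SN S2]
  have fe: "eventually (\<lambda>t. csmult (of_real (sqrt (S t + 2) * ga (lam (S t)) (1/ln t))) (N t)
        + csmult (of_real (gb (lam (S t)) (1/ln t))) (N t + ac (N t)) = f t) at_top"
    using ev1
  proof eventually_elim
    case (elim t)
    show ?case unfolding f_def FF_def S_def tau_def N_def csmult_add csmult_csmult ac_csmult ac_add
      by (simp add: mult.commute)
  qed
  have flim: "(f \<longlongrightarrow> T) at_top"
  proof -
    have "((\<lambda>t. csmult (of_real (sqrt (S t + 2) * ga (lam (S t)) (1/ln t))) (N t)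
        + csmult (of_real (gb (lam (S t)) (1/ln t))) (N t + ac (N t))) \<longlongrightarrow>
        csmult (of_real (exp \<alpha> - exp (-\<alpha>))) B + csmult (of_real (exp (-\<alpha>))) (B + ac B)) at_top"
      by (intro tendsto_add tendsto_csmult tendsto_of_real sc Nlim tendsto_ac)
    then show ?thesis unfolding T_limit_eq T_def[symmetric]
      using Lim_transform_eventually[OF _ fe] by blast
  qed
  have "proj_tendsto (\<lambda>t. Rtilde (1 / ln t) (pclass (A t))) (pclass T) at_top"
    unfolding proj_tendsto_def using Tnz mem flim by blast
  then show ?thesis using PSL unfolding T_def by simp
qed


end
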